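(* Let $X,E$ be as in Situation 1 or Situation 2 (see context), with $A$ the corresponding scalar algebra, and suppose $Z(E)$ is one-dimensional. Then for every $T\in Z(A(X,E))$ there exists $h\in A$ such that $T=M_h$, i.e. $Tf=hf$ for all $f\in A(X,E)$.
   Context: $\mathbb K=\mathbb R$ or $\mathbb C$; $E$ is a $\mathbb K$-Banach space. Situation 1: $X$ realcompact completely regular, $E$ infinite-dimensional, $A(X,E)=C_b(X,E)$ (bounded continuous $E$-valued functions) and $A=C_b(X,\mathbb K)$. Situation 2: $X$ complete metric space, $A(X,E)=C_b^u(X,E)$ (bounded uniformly continuous) and $A=C_b^u(X,\mathbb K)$. These spaces carry the sup norm. For a Banach space $B$, ${\rm Ext}_B$ is the set of extreme points of the closed unit ball of the dual $B'$. A continuous linear $T:B\to B$ is a multiplier if there is $a_T:{\rm Ext}_B\to\mathbb K$ with $p\circ T=a_T(p)p$ for all $p\in{\rm Ext}_B$. For multipliers $T,S$, $S$ is an adjoint of $T$ if $a_S=\overline{a_T}$. The centralizer $Z(B)$ is the set of multipliers of $B$ that have an adjoint. $M_h(f)=hf$. $Z(E)$ one-dimensional means $Z(E)=\mathbb K\,\mathrm{Id}_E$. *)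

theory Defs
  imports "HOL-Analysis.Analysis" "HOL-Library.Function_Algebras"
begin

text \<open>A space is realcompact if it is homeomorphic to a closed subspace of a power of the reals.
  The index set is taken as a set of real-valued functions on the space.\<close>
definition realcompact :: "'x topology \<Rightarrow> bool" where
  "realcompact X \<longleftrightarrow>
     (\<exists>(J :: ('x \<Rightarrow> real) set) (e :: 'x \<Rightarrow> (('x \<Rightarrow> real) \<Rightarrow> real)).
        embedding_map X (powertop_real J) e \<and>
        closedin (powertop_real J) (e ` topspace X))"

definition dual_ball ::
  "'v::ab_group_add set \<Rightarrow> ('v \<Rightarrow> real) \<Rightarrow> ('k::real_normed_field \<Rightarrow> 'v \<Rightarrow> 'v) \<Rightarrow> ('v \<Rightarrow> 'k) set" where
  "dual_ball S nm sm = {p.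
      (\<forall>v\<in>S. \<forall>w\<in>S. p (v + w) = p v + p w) \<and>
      (\<forall>c. \<forall>v\<in>S. p (sm c v) = c * p v) \<and>
      (\<forall>v\<in>S. norm (p v) \<le> nm v) \<and>
      (\<forall>v. v \<notin> S \<longrightarrow> p v = 0)}"

definition Ext ::
  "'v::ab_group_add set \<Rightarrow> ('v \<Rightarrow> real) \<Rightarrow> ('k::real_normed_field \<Rightarrow> 'v \<Rightarrow> 'v) \<Rightarrow> ('v \<Rightarrow> 'k) set" where
  "Ext S nm sm = {p \<in> dual_ball S nm sm.
      \<forall>q r (t::real). q \<in> dual_ball S nm sm \<and> r \<in> dual_ball S nm sm \<and> 0 < t \<and> t < 1 \<and>
        p = (\<lambda>v. of_real t * q v + of_real (1 - t) * r v) \<longrightarrow> q = r}"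

definition bounded_op ::
  "'v::ab_group_add set \<Rightarrow> ('v \<Rightarrow> real) \<Rightarrow> ('k \<Rightarrow> 'v \<Rightarrow> 'v) \<Rightarrow> ('v \<Rightarrow> 'v) \<Rightarrow> bool" where
  "bounded_op S nm sm T \<longleftrightarrow>
      (\<forall>v\<in>S. T v \<in> S) \<and>
      (\<forall>v\<in>S. \<forall>w\<in>S. T (v + w) = T v + T w) \<and>
      (\<forall>c. \<forall>v\<in>S. T (sm c v) = sm c (T v)) \<and>
      (\<exists>C. \<forall>v\<in>S. nm (T v) \<le> C * nm v)"

definition multiplier_with ::
  "'v::ab_group_add set \<Rightarrow> ('v \<Rightarrow> real) \<Rightarrow> ('k::real_normed_field \<Rightarrow> 'v \<Rightarrow> 'v) \<Rightarrow>
     ('v \<Rightarrow> 'v) \<Rightarrow> (('v \<Rightarrow> 'k) \<Rightarrow> 'k) \<Rightarrow> bool" where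
  "multiplier_with S nm sm T a \<longleftrightarrow>
      bounded_op S nm sm T \<and> (\<forall>p\<in>Ext S nm sm. \<forall>v\<in>S. p (T v) = a p * p v)"

text \<open>Centralizer Z(B): multipliers T having an adjoint multiplier U, i.e. a_U = conj o a_T
  (cj is the conjugation of the scalar field: id for R, cnj for C).\<close>
definition centralizer ::
  "'v::ab_group_add set \<Rightarrow> ('v \<Rightarrow> real) \<Rightarrow> ('k::real_normed_field \<Rightarrow> 'v \<Rightarrow> 'v) \<Rightarrow> ('k \<Rightarrow> 'k) \<Rightarrow>
     ('v \<Rightarrow> 'v) set" where
  "centralizer S nm sm cj = {T. \<exists>U a.
      multiplier_with S nm sm T a \<and> multiplier_with S nm sm U (\<lambda>p. cj (a p))}"

definition Z_one_dim :: "('k::real_normed_field \<Rightarrow> 'e::real_normed_vector \<Rightarrow> 'e) \<Rightarrow> ('k \<Rightarrow> 'k) \<Rightarrow> bool" where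
  "Z_one_dim sm cj \<longleftrightarrow> centralizer (UNIV::'e set) norm sm cj = {T. \<exists>c. T = sm c}"

definition infinite_dim_K :: "('k \<Rightarrow> 'e::ab_group_add \<Rightarrow> 'e) \<Rightarrow> bool" where
  "infinite_dim_K sm \<longleftrightarrow>
     \<not> (\<exists>F::'e set. finite F \<and> (\<forall>x. \<exists>c. x = (\<Sum>v\<in>F. sm (c v) v)))"

text \<open>A complex scalar multiplication turning the real Banach space 'e into a complex Banach
  space (compatible with the real structure and the norm).\<close>
definition complex_scaling :: "(complex \<Rightarrow> 'e::real_normed_vector \<Rightarrow> 'e) \<Rightarrow> bool" where
  "complex_scaling sm \<longleftrightarrow>
     (\<forall>a b x. sm (a + b) x = sm a x + sm b x) \<and>
     (\<forall>a x y. sm a (x + y) = sm a x + sm a y) \<and>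
     (\<forall>a b x. sm (a * b) x = sm a (sm b x)) \<and>
     (\<forall>x. sm 1 x = x) \<and>
     (\<forall>a x. norm (sm a x) = cmod a * norm x) \<and>
     (\<forall>r x. sm (complex_of_real r) x = r *\<^sub>R x)"

definition Cb :: "('x::topological_space \<Rightarrow> 'e::real_normed_vector) set" where
  "Cb = {f. continuous_on UNIV f \<and> bounded (range f)}"

definition Cbu :: "('x::metric_space \<Rightarrow> 'e::real_normed_vector) set" where
  "Cbu = {f. uniformly_continuous_on UNIV f \<and> bounded (range f)}"

definition supnorm :: "('x \<Rightarrow> 'e::real_normed_vector) \<Rightarrow> real" where
  "supnorm f = (SUP x. norm (f x))"

definition fsm :: "('k \<Rightarrow> 'e \<Rightarrow> 'e) \<Rightarrow> 'k \<Rightarrow> ('x \<Rightarrow> 'e) \<Rightarrow> ('x \<Rightarrow> 'e)" where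
  "fsm sm c f = (\<lambda>x. sm c (f x))"

end

theory Submission
  imports Defs
begin

definition sublin :: "('e::real_vector \<Rightarrow> real) \<Rightarrow> bool" where
  "sublin q \<longleftrightarrow> (\<forall>x y. q (x + y) \<le> q x + q y) \<and> (\<forall>c x. c \<ge> 0 \<longrightarrow> q (c *\<^sub>R x) \<le> c * q x)"

definition shiftf :: "('e::real_vector \<Rightarrow> real) \<Rightarrow> 'e \<Rightarrow> 'e \<Rightarrow> real" where
  "shiftf q y x = Inf ((\<lambda>t. q (x + t *\<^sub>R y) - t * q y) ` {0..})"

lemma sublin_add: "sublin q \<Longrightarrow> q (x + y) \<le> q x + q y"
  unfolding sublin_def by blast

lemma sublin_0: assumes "sublin q" shows "q 0 = 0"
proof -
  have "q 0 \<le> 0" using assms unfolding sublin_def by (metis order_refl mult_zero_left scaleR_zero_left)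
  moreover have "q 0 \<le> q 0 + q 0" using assms unfolding sublin_def by (metis add_0)
  ultimately show ?thesis by linarith
qed

lemma sublin_hom: assumes "sublin q" "c \<ge> 0" shows "q (c *\<^sub>R x) = c * q x"
proof (cases "c = 0")
  case True then show ?thesis using sublin_0[OF assms(1)] by simp
next
  case False
  have 1: "q (c *\<^sub>R x) \<le> c * q x" using assms unfolding sublin_def by blast
  have "q x = q ((1/c) *\<^sub>R (c *\<^sub>R x))" using False by simp
  also have "\<dots> \<le> (1/c) * q (c *\<^sub>R x)"
    using conjunct2[OF assms(1)[unfolded sublin_def], rule_format, of "1/c" "c *\<^sub>R x"] assms(2) by simp
  finally have "c * q x \<le> q (c *\<^sub>R x)" using False assms(2)
    by (simp add: field_simps)
  with 1 show ?thesis by linarith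
qed

lemma sublin_neg: assumes "sublin q" shows "- q (- x) \<le> q x"
proof -
  have "q 0 \<le> q x + q (-x)" using assms unfolding sublin_def by (metis add.right_inverse)
  then show ?thesis using sublin_0[OF assms] by linarith
qed

lemma shift_elem_lb: assumes "sublin q" "t \<ge> 0"
  shows "- q (- x) \<le> q (x + t *\<^sub>R y) - t * q y"
proof -
  have "q (t *\<^sub>R y) \<le> q (x + t *\<^sub>R y) + q (-x)"
    using sublin_add[OF assms(1), of "x + t *\<^sub>R y" "-x"] by simp
  then show ?thesis using sublin_hom[OF assms, of y] by linarith
qed

lemma shift_bdd: assumes "sublin q" shows "bdd_below ((\<lambda>t. q (x + t *\<^sub>R y) - t * q y) ` {0..})"
  using shift_elem_lb[OF assms] by (intro bdd_belowI[where m="- q (- x)"]) auto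

lemma shift_lower: assumes "sublin q" "t \<ge> 0" shows "shiftf q y x \<le> q (x + t *\<^sub>R y) - t * q y"
  unfolding shiftf_def using assms by (intro cInf_lower shift_bdd) auto

lemma shift_greatest: assumes "\<And>t. t \<ge> 0 \<Longrightarrow> m \<le> q (x + t *\<^sub>R y) - t * q y" shows "m \<le> shiftf q y x"
  unfolding shiftf_def using assms by (intro cInf_greatest) auto

lemma shift_le: assumes "sublin q" shows "shiftf q y x \<le> q x"
  using shift_lower[OF assms, of 0] by simp

lemma shift_sublin: assumes "sublin q" shows "sublin (shiftf q y)"
  unfolding sublin_def
proof (intro conjI allI impI)
  fix x1 x2
  have *: "shiftf q y (x1 + x2) \<le> (q (x1 + t1 *\<^sub>R y) - t1 * q y) + (q (x2 + t2 *\<^sub>R y) - t2 * q y)"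
    if "t1 \<ge> 0" "t2 \<ge> 0" for t1 t2
  proof -
    have "shiftf q y (x1 + x2) \<le> q (x1 + x2 + (t1 + t2) *\<^sub>R y) - (t1 + t2) * q y"
      using that by (intro shift_lower assms) auto
    also have "x1 + x2 + (t1 + t2) *\<^sub>R y = (x1 + t1 *\<^sub>R y) + (x2 + t2 *\<^sub>R y)"
      by (simp add: algebra_simps)
    also have "q \<dots> \<le> q (x1 + t1 *\<^sub>R y) + q (x2 + t2 *\<^sub>R y)"
      by (rule sublin_add[OF assms])
    finally show ?thesis by (simp add: algebra_simps)
  qed
  have "shiftf q y (x1 + x2) - (q (x2 + t2 *\<^sub>R y) - t2 * q y) \<le> shiftf q y x1" if "t2 \<ge> 0" for t2
  proof (intro shift_greatest)
    fix t1 :: real assume "t1 \<ge> 0"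
    from *[OF this that] show "shiftf q y (x1 + x2) - (q (x2 + t2 *\<^sub>R y) - t2 * q y) \<le> q (x1 + t1 *\<^sub>R y) - t1 * q y"
      by linarith
  qed
  then have "shiftf q y (x1 + x2) - shiftf q y x1 \<le> shiftf q y x2"
  proof (intro shift_greatest)
    fix t2 :: real assume "t2 \<ge> 0"
    from this show "shiftf q y (x1 + x2) - shiftf q y x1 \<le> q (x2 + t2 *\<^sub>R y) - t2 * q y"
      using \<open>\<And>t2. t2 \<ge> 0 \<Longrightarrow> _\<close> by fastforce
  qed
  then show "shiftf q y (x1 + x2) \<le> shiftf q y x1 + shiftf q y x2" by linarith
next
  fix c :: real and x assume c: "c \<ge> 0"
  show "shiftf q y (c *\<^sub>R x) \<le> c * shiftf q y x"
  proof (cases "c = 0")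
    case True
    then show ?thesis using shift_lower[OF assms, of 0 y 0] sublin_0[OF assms] by simp
  next
    case False
    have "shiftf q y (c *\<^sub>R x) / c \<le> shiftf q y x"
    proof (rule shift_greatest)
      fix t :: real assume t: "t \<ge> 0"
      have "shiftf q y (c *\<^sub>R x) \<le> q (c *\<^sub>R x + (c * t) *\<^sub>R y) - (c * t) * q y"
        using t c by (intro shift_lower assms) auto
      also have "q (c *\<^sub>R x + (c * t) *\<^sub>R y) = c * q (x + t *\<^sub>R y)"
        using sublin_hom[OF assms c, of "x + t *\<^sub>R y"] by (simp add: scaleR_add_right)
      finally show "shiftf q y (c *\<^sub>R x) / c \<le> q (x + t *\<^sub>R y) - t * q y"
        using c False by (simp add: field_simps)
    qed
    then show ?thesis using c False by (simp add: field_simps)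
  qed
qed

lemma minimal_sublin_linear:
  assumes q: "sublin q" and min: "\<And>r. sublin r \<Longrightarrow> (\<forall>x. r x \<le> q x) \<Longrightarrow> r = q"
  shows "linear q"
proof -
  have neg: "q (- y) = - q y" for y
  proof -
    have "shiftf q y = q" using min[OF shift_sublin[OF q]] shift_le[OF q] by blast
    then have "q (- y) \<le> q (- y + 1 *\<^sub>R y) - 1 * q y" using shift_lower[OF q, of 1 y "-y"] by simp
    then have "q (- y) \<le> - q y" using sublin_0[OF q] by simp
    moreover have "- q y \<le> q (- y)" using sublin_neg[OF q, of "-y"] by simp
    ultimately show ?thesis by linarith
  qed
  show ?thesis
  proof (rule linearI)
    fix x y
    have "q x = q ((x + y) + (- y))" by simp
    also have "\<dots> \<le> q (x + y) + q (- y)" by (rule sublin_add[OF q])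
    finally show "q (x + y) = q x + q y" using sublin_add[OF q, of x y] neg[of y] by linarith
  next
    fix c :: real and x
    show "q (c *\<^sub>R x) = c *\<^sub>R q x"
    proof (cases "c \<ge> 0")
      case True then show ?thesis using sublin_hom[OF q True] by simp
    next
      case False
      then have "q (c *\<^sub>R x) = q (- ((- c) *\<^sub>R x))" by simp
      also have "\<dots> = - ((- c) * q x)" using neg sublin_hom[OF q, of "-c" x] False by simp
      finally show ?thesis by simp
    qed
  qed
qed

lemma po_lemma: "partial_order_on A (relation_of (\<lambda>a b :: 'a \<Rightarrow> real. \<forall>x. b x \<le> a x) A)"
  unfolding partial_order_on_def preorder_on_def
proof (intro conjI)
  show "relation_of (\<lambda>a b :: 'a \<Rightarrow> real. \<forall>x. b x \<le> a x) A \<subseteq> A \<times> A" by (auto simp: relation_of_def)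
  show "refl_on A (relation_of (\<lambda>a b :: 'a \<Rightarrow> real. \<forall>x. b x \<le> a x) A)" by (auto simp: refl_on_def relation_of_def)
  show "trans (relation_of (\<lambda>a b :: 'a \<Rightarrow> real. \<forall>x. b x \<le> a x) A)"
  proof (rule transI)
    fix a b c assume "(a, b) \<in> relation_of (\<lambda>a b :: 'a \<Rightarrow> real. \<forall>x. b x \<le> a x) A"
      "(b, c) \<in> relation_of (\<lambda>a b :: 'a \<Rightarrow> real. \<forall>x. b x \<le> a x) A"
    then show "(a, c) \<in> relation_of (\<lambda>a b :: 'a \<Rightarrow> real. \<forall>x. b x \<le> a x) A"
      unfolding relation_of_def by (auto intro: order_trans)
  qed
  show "antisym (relation_of (\<lambda>a b :: 'a \<Rightarrow> real. \<forall>x. b x \<le> a x) A)"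
    unfolding antisym_def relation_of_def by (auto intro!: ext intro: antisym)
qed

lemma koenig:
  fixes q0 :: "'a::real_vector \<Rightarrow> real"
  assumes q0: "sublin q0"
  shows "\<exists>\<rho>. linear \<rho> \<and> (\<forall>x. \<rho> x \<le> q0 x)"
proof -
  define A where "A = {q. sublin q \<and> (\<forall>x. q x \<le> q0 x)}"
  define P where "P = (\<lambda>a b :: 'a \<Rightarrow> real. \<forall>x. b x \<le> a x)"
  have po: "partial_order_on A (relation_of P A)"
    unfolding P_def by (rule po_lemma)
  have ch: "\<exists>u\<in>A. \<forall>a\<in>C. P a u" if C: "C \<in> Chains (relation_of P A)" for C
  proof (cases "C = {}")
    case True
    then show ?thesis using q0 unfolding A_def by auto
  next
    case False
    have CA: "C \<subseteq> A" using C unfolding Chains_def relation_of_def by auto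
    have tot: "P a b \<or> P b a" if "a \<in> C" "b \<in> C" for a b
      using C that unfolding Chains_def relation_of_def by auto
    have sub: "sublin a" "\<And>x. a x \<le> q0 x" if "a \<in> C" for a using CA that unfolding A_def by auto
    define u where "u = (\<lambda>x. Inf ((\<lambda>a. a x) ` C))"
    have bdd: "bdd_below ((\<lambda>a. a x) ` C)" for x
    proof (rule bdd_belowI[where m="- q0 (- x)"])
      fix z assume "z \<in> (\<lambda>a. a x) ` C"
      then obtain a where a: "a \<in> C" "z = a x" by auto
      show "- q0 (- x) \<le> z" using sublin_neg[OF sub(1)[OF a(1)], of x] sub(2)[OF a(1), of "-x"] a(2) by linarith
    qed
    have low: "u x \<le> a x" if "a \<in> C" for a x
      unfolding u_def using that bdd by (intro cInf_lower) auto
    have great: "m \<le> u x" if "\<And>a. a \<in> C \<Longrightarrow> m \<le> a x" for m x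
      unfolding u_def using that False by (intro cInf_greatest) auto
    have "sublin u"
      unfolding sublin_def
    proof (intro conjI allI impI)
      fix x y
      have "u (x + y) - b y \<le> a x" if "a \<in> C" "b \<in> C" for a b
      proof (cases "P a b")
        case True
        then have "b x \<le> a x" unfolding P_def by blast
        then show ?thesis using low[OF that(2), of "x+y"] sublin_add[OF sub(1)[OF that(2)], of x y]
          by linarith
      next
        case False
        then have "P b a" using tot that by blast
        then have "a y \<le> b y" unfolding P_def by blast
        then show ?thesis using low[OF that(1), of "x+y"] sublin_add[OF sub(1)[OF that(1)], of x y]
          by linarith
      qed
      then have "u (x + y) - b y \<le> u x" if "b \<in> C" for b using that by (intro great) auto
      then have "u (x + y) - u x \<le> u y"
      proof (intro great)
        fix b assume "b \<in> C"
        with \<open>\<And>b. b \<in> C \<Longrightarrow> u (x + y) - b y \<le> u x\<close>[of b] show "u (x + y) - u x \<le> b y" by linarith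
      qed
      then show "u (x + y) \<le> u x + u y" by linarith
    next
      fix c :: real and x assume c: "c \<ge> 0"
      show "u (c *\<^sub>R x) \<le> c * u x"
      proof (cases "c = 0")
        case True
        obtain a where a: "a \<in> C" using False by auto
        then show ?thesis using True low[OF a, of 0] sublin_0[OF sub(1)[OF a]] by simp
      next
        case False
        have "u (c *\<^sub>R x) / c \<le> u x"
        proof (rule great)
          fix a assume a: "a \<in> C"
          have "u (c *\<^sub>R x) \<le> c * a x" using low[OF a, of "c *\<^sub>R x"] sublin_hom[OF sub(1)[OF a] c, of x] by simp
          then show "u (c *\<^sub>R x) / c \<le> a x" using c False by (simp add: field_simps)
        qed
        then show ?thesis using c False by (simp add: field_simps)
      qed
    qed
    moreover have "u x \<le> q0 x" for x
    proof -
      obtain a where a: "a \<in> C" using False by auto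
      then show ?thesis using low[OF a, of x] sub(2)[OF a, of x] by linarith
    qed
    ultimately have "u \<in> A" unfolding A_def by auto
    moreover have "P a u" if "a \<in> C" for a unfolding P_def using low[OF that] by auto
    ultimately show ?thesis by blast
  qed
  obtain m where m: "m \<in> A" and mmin: "\<forall>a\<in>A. P m a \<longrightarrow> a = m"
    using predicate_Zorn[OF po ch] by blast
  have "linear m"
  proof (rule minimal_sublin_linear)
    show "sublin m" using m unfolding A_def by auto
    fix r assume "sublin r" "\<forall>x. r x \<le> m x"
    moreover then have "r \<in> A" using m unfolding A_def by (auto intro: order_trans)
    ultimately show "r = m" using mmin unfolding P_def by auto
  qed
  then show ?thesis using m unfolding A_def by auto
qed

lemma real_HB:
  fixes v :: "'e::real_normed_vector"
  shows "\<exists>\<rho>. linear \<rho> \<and> (\<forall>w. \<bar>\<rho> w\<bar> \<le> norm w) \<and> \<rho> v = norm v"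
proof -
  have sn: "sublin (norm :: 'e \<Rightarrow> real)"
    unfolding sublin_def by (auto intro: norm_triangle_ineq)
  obtain \<rho> where l: "linear \<rho>" and le: "\<And>x. \<rho> x \<le> shiftf norm v x"
    using koenig[OF shift_sublin[OF sn, of v]] by blast
  have le2: "\<rho> x \<le> norm x" for x using le[of x] shift_le[OF sn, of v x] by linarith
  have "\<rho> (- v) \<le> norm (- v + 1 *\<^sub>R v) - 1 * norm v"
    using le[of "-v"] shift_lower[OF sn, of 1 v "-v"] by linarith
  then have "\<rho> v \<ge> norm v" using linear_neg[OF l, of v] by simp
  moreover have "\<bar>\<rho> w\<bar> \<le> norm w" for w
    using le2[of w] le2[of "-w"] linear_neg[OF l, of w] by auto
  ultimately show ?thesis using l le2[of v] by (intro exI[of _ \<rho>]) auto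
qed

lemma rotation: fixes z :: "'k::real_normed_field"
  shows "\<exists>l. norm l = 1 \<and> l * z = of_real (norm z)"
proof (cases "z = 0")
  case True then show ?thesis by (intro exI[of _ 1]) auto
next
  case False
  then show ?thesis
    by (intro exI[of _ "of_real (norm z) / z"]) (simp add: norm_divide)
qed

locale kfield =
  fixes re :: "'k::{real_normed_field,heine_borel} \<Rightarrow> real"
  assumes re_add: "re (a + b) = re a + re b"
    and re_scale: "re (of_real r * a) = r * re a"
    and re_of_real: "re (of_real r) = r"
    and re_le: "re a \<le> norm a"
begin

lemma re_diff: "re (a - b) = re a - re b"
proof -
  have "re (a - b) = re (a + of_real (-1) * b)" by simp
  also have "\<dots> = re a - re b" by (simp only: re_add re_scale)
  finally show ?thesis .
qed

lemma re_zero: "re 0 = 0" using re_of_real[of 0] by simp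

lemma re_abs: "\<bar>re a\<bar> \<le> norm a"
  using re_le[of a] re_le[of "-a"] re_diff[of 0 a] re_zero by auto

lemma re_bl: "bounded_linear re"
proof (rule bounded_linear_intro[where K=1])
  show "re (x + y) = re x + re y" for x y by (rule re_add)
  show "re (r *\<^sub>R x) = r *\<^sub>R re x" for r x by (simp add: scaleR_conv_of_real re_scale)
  show "norm (re x) \<le> norm x * 1" for x using re_abs[of x] by simp
qed

lemma re_cont: "continuous_on S re"
  using re_bl by (intro linear_continuous_on) 

lemma re_conv: "re (of_real t * a + of_real (1 - t) * b) = t * re a + (1 - t) * re b"
  by (simp only: re_add re_scale)

end

lemma po_sets: "partial_order_on A (relation_of (\<lambda>a b :: 'a set. b \<subseteq> a) A)"
  unfolding partial_order_on_def preorder_on_def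
  by (auto simp: relation_of_def refl_on_def trans_def antisym_def)

locale kspace = kfield re for re :: "'k::{real_normed_field,heine_borel} \<Rightarrow> real" +
  fixes sm :: "'k \<Rightarrow> 'e::real_normed_vector \<Rightarrow> 'e"
  assumes sm_add1: "sm (a + b) x = sm a x + sm b x"
    and sm_add2: "sm a (x + y) = sm a x + sm a y"
    and sm_mult: "sm (a * b) x = sm a (sm b x)"
    and sm_one: "sm 1 x = x"
    and sm_norm: "norm (sm a x) = norm a * norm x"
    and sm_real: "sm (of_real r) x = r *\<^sub>R x"
    and norming: "\<exists>p \<in> dual_ball UNIV norm sm. p v = of_real (norm v)"
begin

abbreviation "BE \<equiv> dual_ball (UNIV :: 'e set) norm sm"

lemma BE_iff: "p \<in> BE \<longleftrightarrow> (\<forall>v w. p (v + w) = p v + p w) \<and> (\<forall>c v. p (sm c v) = c * p v) \<and> (\<forall>v. norm (p v) \<le> norm v)"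
  by (simp add: dual_ball_def)

lemma BE_add: "p \<in> BE \<Longrightarrow> p (v + w) = p v + p w" by (simp add: BE_iff)
lemma BE_sm: "p \<in> BE \<Longrightarrow> p (sm c v) = c * p v" by (simp add: BE_iff)
lemma BE_norm: "p \<in> BE \<Longrightarrow> norm (p v) \<le> norm v" by (simp add: BE_iff)

definition face :: "('e \<Rightarrow> 'k) set \<Rightarrow> bool" where
  "face G \<longleftrightarrow> G \<subseteq> BE \<and> (\<forall>p\<in>G. \<forall>q r t. q \<in> BE \<and> r \<in> BE \<and> 0 < t \<and> t < 1 \<and>
     p = (\<lambda>v. of_real t * q v + of_real (1 - t) * r v) \<longrightarrow> q \<in> G \<and> r \<in> G)"

lemma face_BE: "face BE" unfolding face_def by auto

lemma faceD: assumes "face G" "p \<in> G" "q \<in> BE" "r \<in> BE" "0 < t" "t < 1"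
  "p = (\<lambda>v. of_real t * q v + of_real (1 - t) * r v)" shows "q \<in> G" "r \<in> G"
  using assms unfolding face_def by blast+

lemma face_sub: "face G \<Longrightarrow> G \<subseteq> BE" unfolding face_def by blast

lemma face_Inter: assumes "\<And>G. G \<in> C \<Longrightarrow> face G" "C \<noteq> {}" shows "face (\<Inter>C)"
proof -
  have "\<Inter>C \<subseteq> BE" using assms face_sub by blast
  moreover have "q \<in> \<Inter>C \<and> r \<in> \<Inter>C" if "p \<in> \<Inter>C" "q \<in> BE" "r \<in> BE" "0 < t" "t < 1"
    "p = (\<lambda>v. of_real t * q v + of_real (1 - t) * r v)" for p q r t
  proof -
    have "q \<in> G \<and> r \<in> G" if "G \<in> C" for G
      using faceD[OF assms(1)[OF that] _ \<open>q \<in> BE\<close> \<open>r \<in> BE\<close> \<open>0 < t\<close> \<open>t < 1\<close> \<open>p = _\<close>] \<open>p \<in> \<Inter>C\<close> that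
      by blast
    then show ?thesis by blast
  qed
  ultimately show ?thesis unfolding face_def by blast
qed

lemma closed_BE: "closed BE"
proof -
  have eq: "BE = {p. \<forall>v. \<forall>w. p (v + w) = p v + p w} \<inter> {p. \<forall>c. \<forall>v. p (sm c v) = c * p v} \<inter> {p. \<forall>v. norm (p v) \<le> norm v}"
    by (auto simp: BE_iff)
  show ?thesis unfolding eq
    by (intro closed_Int closed_Collect_all closed_Collect_eq closed_Collect_le continuous_intros
        continuous_on_product_coordinates)
qed

lemma compact_BE: "compact BE"
proof -
  have "compact (PiE UNIV (\<lambda>v::'e. cball (0::'k) (norm v)))"
    using compactin_PiE[of "\<lambda>_. euclidean" UNIV "\<lambda>v::'e. cball (0::'k) (norm v)"]
    by (simp add: euclidean_product_topology)
  moreover have "BE \<subseteq> PiE UNIV (\<lambda>v::'e. cball (0::'k) (norm v))"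
    by (auto simp: BE_iff)
  ultimately have "compact (PiE UNIV (\<lambda>v::'e. cball (0::'k) (norm v)) \<inter> BE)"
    using closed_BE by (intro compact_Int_closed)
  moreover have "PiE UNIV (\<lambda>v::'e. cball (0::'k) (norm v)) \<inter> BE = BE"
    using \<open>BE \<subseteq> _\<close> by blast
  ultimately show ?thesis by simp
qed

lemma cont_eval_re: "continuous_on S (\<lambda>p::'e\<Rightarrow>'k. re (p w))"
proof -
  have "continuous_on UNIV (re \<circ> (\<lambda>p::'e\<Rightarrow>'k. p w))"
    by (intro continuous_on_compose re_cont continuous_on_product_coordinates)
  then show ?thesis by (auto simp: o_def intro: continuous_on_subset)
qed

lemma max_face:
  assumes G: "face G" "closed G" "G \<noteq> {}"
  shows "\<exists>M. (\<forall>p\<in>G. re (p w) \<le> M) \<and> {p\<in>G. re (p w) = M} \<noteq> {} \<and> closed {p\<in>G. re (p w) = M}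
           \<and> face {p\<in>G. re (p w) = M}"
proof -
  have "compact (BE \<inter> G)" using G compact_BE by (intro compact_Int_closed) auto
  moreover have "BE \<inter> G = G" using face_sub[OF G(1)] by blast
  ultimately have "compact G" by simp
  then obtain p0 where p0: "p0 \<in> G" "\<And>p. p \<in> G \<Longrightarrow> re (p w) \<le> re (p0 w)"
    using continuous_attains_sup[OF _ G(3) cont_eval_re] by blast
  define M where "M = re (p0 w)"
  have "closed {p\<in>G. re (p w) = M}"
  proof -
    have "{p\<in>G. re (p w) = M} = G \<inter> {p. re (p w) = M}" by auto
    moreover have "closed {p::'e\<Rightarrow>'k. re (p w) = M}"
      by (intro closed_Collect_eq cont_eval_re continuous_intros)
    ultimately show ?thesis using G(2) by auto
  qed
  moreover have "face {p\<in>G. re (p w) = M}"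
    unfolding face_def
  proof (intro conjI)
    show "{p \<in> G. re (p w) = M} \<subseteq> BE" using face_sub[OF G(1)] by auto
  next
   show "\<forall>p\<in>{p \<in> G. re (p w) = M}. \<forall>q r t. q \<in> BE \<and> r \<in> BE \<and> 0 < t \<and> t < 1 \<and> p = (\<lambda>v. of_real t * q v + of_real (1 - t) * r v) \<longrightarrow>
     q \<in> {p \<in> G. re (p w) = M} \<and> r \<in> {p \<in> G. re (p w) = M}"
   proof (intro ballI allI impI)
    fix p q r and t :: real
    assume p: "p \<in> {p \<in> G. re (p w) = M}"
      and h: "q \<in> BE \<and> r \<in> BE \<and> 0 < t \<and> t < 1 \<and> p = (\<lambda>v. of_real t * q v + of_real (1 - t) * r v)"
    then have qr: "q \<in> G" "r \<in> G" using faceD[OF G(1), of p q r t] by auto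
    have a1: "M = t * re (q w) + (1 - t) * re (r w)" using p h re_conv by auto
    have a2: "re (q w) \<le> M" "re (r w) \<le> M" using qr p0 M_def by auto
    have a3: "0 < t" "t < 1" using h by auto
    have "t * (M - re (q w)) \<ge> 0" "(1 - t) * (M - re (r w)) \<ge> 0" using a2 a3 by auto
    moreover have "t * (M - re (q w)) + (1 - t) * (M - re (r w)) = 0" using a1 by (simp add: algebra_simps)
    ultimately have "t * (M - re (q w)) = 0" "(1 - t) * (M - re (r w)) = 0" by linarith+
    then have "re (q w) = M \<and> re (r w) = M" using a3 by auto
    then show "q \<in> {p \<in> G. re (p w) = M} \<and> r \<in> {p \<in> G. re (p w) = M}" using qr by auto
   qed
  qed
  ultimately show ?thesis using p0 M_def by blast
qed

lemma ext_sep: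
  assumes v: "v \<noteq> 0"
  shows "\<exists>q \<in> Ext UNIV norm sm. q v \<noteq> 0"
proof -
  obtain M0 where M0: "\<forall>p\<in>BE. re (p v) \<le> M0" "{p\<in>BE. re (p v) = M0} \<noteq> {}"
    "closed {p\<in>BE. re (p v) = M0}" "face {p\<in>BE. re (p v) = M0}"
    using max_face[OF face_BE closed_BE] norming[of v] by blast
  define G0 where "G0 = {p\<in>BE. re (p v) = M0}"
  obtain p1 where p1: "p1 \<in> BE" "p1 v = of_real (norm v)" using norming[of v] by blast
  have "re (p1 v) = norm v" using p1(2) re_of_real by simp
  moreover have "re (p1 v) \<le> M0" using M0(1) p1(1) by blast
  moreover have "norm v > 0" using v by simp
  ultimately have M0pos: "M0 > 0" by linarith
  define A where "A = {G. G \<subseteq> G0 \<and> G \<noteq> {} \<and> closed G \<and> face G}"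
  have ch: "\<exists>u\<in>A. \<forall>a\<in>C. u \<subseteq> a" if C: "C \<in> Chains (relation_of (\<lambda>a b. b \<subseteq> a) A)" for C
  proof (cases "C = {}")
    case True
    then show ?thesis using M0 unfolding A_def G0_def by blast
  next
    case False
    have CA: "C \<subseteq> A" using C unfolding Chains_def relation_of_def by auto
    have chain: "subset.chain A C"
      using C CA unfolding Chains_def relation_of_def subset.chain_def by auto
    have "BE \<inter> \<Inter>C \<noteq> {}"
    proof (rule compact_imp_fip[OF compact_BE])
      show "closed T" if "T \<in> C" for T using that CA unfolding A_def by auto
      fix F' assume F': "finite F'" "F' \<subseteq> C"
      show "BE \<inter> \<Inter>F' \<noteq> {}"
      proof (cases "F' = {}")
        case True then show ?thesis using p1 by auto
      next
        case False
        have "subset.chain A F'" using chain F' unfolding subset.chain_def by blast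
        then have "\<Inter>F' \<in> F'" using Inter_in_chain[OF F'(1) False] by blast
        then have "\<Inter>F' \<in> A" using F' CA by auto
        then show ?thesis unfolding A_def using face_sub by auto
      qed
    qed
    moreover have "\<Inter>C \<subseteq> BE" using CA False face_sub unfolding A_def by blast
    ultimately have ne: "\<Inter>C \<noteq> {}" by blast
    have "\<Inter>C \<in> A"
      unfolding A_def
    proof (intro CollectI conjI)
      show "\<Inter>C \<subseteq> G0" using CA False unfolding A_def by blast
      show "\<Inter>C \<noteq> {}" by (rule ne)
      show "closed (\<Inter>C)" using CA unfolding A_def by auto
      show "face (\<Inter>C)" using CA False unfolding A_def by (intro face_Inter) auto
    qed
    then show ?thesis by blast
  qed
  obtain G where G: "G \<in> A" and Gmin: "\<forall>a\<in>A. a \<subseteq> G \<longrightarrow> a = G"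
    using predicate_Zorn[OF po_sets ch] by blast
  have Gf: "face G" "closed G" "G \<noteq> {}" "G \<subseteq> G0" using G unfolding A_def by auto
  have const: "re (p w) = re (p' w)" if "p \<in> G" "p' \<in> G" for p p' w
  proof -
    obtain M where M: "\<forall>p\<in>G. re (p w) \<le> M" "{p\<in>G. re (p w) = M} \<noteq> {}"
      "closed {p\<in>G. re (p w) = M}" "face {p\<in>G. re (p w) = M}"
      using max_face[OF Gf(1-3)] by blast
    have "{p\<in>G. re (p w) = M} \<in> A" using M Gf unfolding A_def by auto
    then have e: "{p\<in>G. re (p w) = M} = G" using Gmin by auto
    have "re (p w) = M" using that(1) e by blast
    moreover have "re (p' w) = M" using that(2) e by blast
    ultimately show ?thesis by simp
  qed
  have eqG: "p = p'" if "p \<in> G" "p' \<in> G" for p p'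
  proof
    fix w
    obtain l where l: "norm l = 1" "l * (p w - p' w) = of_real (norm (p w - p' w))"
      using rotation by blast
    have lin: "p (sm l w) = l * p w" "p' (sm l w) = l * p' w"
      using BE_sm that face_sub[OF Gf(1)] by blast+
    have "re (p (sm l w)) = re (p' (sm l w))" using const that by blast
    then have "re (l * p w) - re (l * p' w) = 0" using lin by simp
    moreover have "l * (p w - p' w) = l * p w - l * p' w" by (simp add: right_diff_distrib)
    ultimately have "re (l * (p w - p' w)) = 0" by (simp add: re_diff)
    then have "re (of_real (norm (p w - p' w))) = 0" using l(2) by simp
    then have "norm (p w - p' w) = 0" by (simp add: re_of_real)
    then show "p w = p' w" by simp
  qed
  obtain q where q: "q \<in> G" using Gf by blast
  have "q \<in> Ext UNIV norm sm"
    unfolding Ext_def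
  proof (intro CollectI conjI allI impI)
    show "q \<in> BE" using q face_sub[OF Gf(1)] by auto
    fix q1 q2 and t :: real
    assume h: "q1 \<in> BE \<and> q2 \<in> BE \<and> 0 < t \<and> t < 1 \<and> q = (\<lambda>v. of_real t * q1 v + of_real (1 - t) * q2 v)"
    then have "q1 \<in> G" "q2 \<in> G" using faceD[OF Gf(1) q] by blast+
    then show "q1 = q2" by (rule eqG)
  qed
  moreover have "q v \<noteq> 0"
  proof
    assume "q v = 0"
    moreover have "re (q v) = M0" using q Gf(4) unfolding G0_def by auto
    ultimately show False using M0pos re_zero by simp
  qed
  ultimately show ?thesis by blast
qed

end

context kspace begin

lemma sm_neg1: "sm (-1) z = - z"
  using sm_real[of "-1" z] by simp

lemma sm_zero2: "sm c 0 = 0"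
  using sm_add2[of c 0 0] by simp

lemma BE_zero: "p \<in> BE \<Longrightarrow> p 0 = 0"
  using BE_add[of p 0 0] by simp

lemma Ext_BE: "q \<in> Ext UNIV norm sm \<Longrightarrow> q \<in> BE"
  unfolding Ext_def by blast

lemma ExtD: assumes "q \<in> Ext UNIV norm sm" "q1 \<in> BE" "q2 \<in> BE" "0 < t" "t < 1"
  "q = (\<lambda>v. of_real t * q1 v + of_real (1 - t) * q2 v)" shows "q1 = q2"
  using assms unfolding Ext_def by blast

lemma zero_BE: "(\<lambda>v. 0) \<in> BE" by (simp add: BE_iff)

lemma Ext_norm1_aux:
  assumes q: "q \<in> Ext UNIV norm sm" and e0: "(e0::'e) \<noteq> 0" and eta: "0 < \<eta>" "\<eta> < 1"
  shows "\<exists>e. norm e \<le> 1 \<and> re (q e) > 1 - \<eta>"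
proof (rule ccontr)
  assume "\<not> ?thesis"
  then have H: "re (q e) \<le> 1 - \<eta>" if "norm e \<le> 1" for e using that by force
  have qB: "q \<in> BE" using Ext_BE[OF q] .
  have bnd: "norm (q e) \<le> (1 - \<eta>) * norm e" for e
  proof (cases "e = 0")
    case True then show ?thesis using BE_zero[OF qB] by simp
  next
    case False
    define e' where "e' = sm (of_real (1 / norm e)) e"
    have ne': "norm e' = 1" unfolding e'_def using False by (simp add: sm_norm norm_divide)
    obtain l where l: "norm l = 1" "l * q e' = of_real (norm (q e'))" using rotation by blast
    have "q (sm l e') = of_real (norm (q e'))" using BE_sm[OF qB] l by simp
    moreover have "norm (sm l e') \<le> 1" using ne' l by (simp add: sm_norm)
    ultimately have "norm (q e') \<le> 1 - \<eta>" using H[of "sm l e'"] re_of_real by simp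
    moreover have "q e' = of_real (1 / norm e) * q e" unfolding e'_def using BE_sm[OF qB] by simp
    ultimately have "norm (q e) / norm e \<le> 1 - \<eta>" by (simp add: norm_mult norm_divide)
    then show ?thesis using False by (simp add: field_simps)
  qed
  define q' where "q' = (\<lambda>v. q v / of_real (1 - \<eta>))"
  have q'B: "q' \<in> BE"
    unfolding BE_iff q'_def
  proof (intro conjI allI)
    fix v w show "q (v + w) / of_real (1 - \<eta>) = q v / of_real (1 - \<eta>) + q w / of_real (1 - \<eta>)"
      using BE_add[OF qB] by (simp add: add_divide_distrib)
  next
    fix c v show "q (sm c v) / of_real (1 - \<eta>) = c * (q v / of_real (1 - \<eta>))"
      using BE_sm[OF qB] by simp
  next
    fix v show "norm (q v / of_real (1 - \<eta>)) \<le> norm v"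
    proof -
      have n: "norm (of_real (1 - \<eta>) :: 'k) = 1 - \<eta>" using eta by (simp only: norm_of_real)
      have "norm (q v / of_real (1 - \<eta>)) = norm (q v) / (1 - \<eta>)" by (simp only: norm_divide n)
      also have "\<dots> \<le> norm v" using bnd[of v] eta by (simp add: field_simps)
      finally show ?thesis .
    qed
  qed
  have "q = (\<lambda>v. of_real (1 - \<eta>) * q' v + of_real (1 - (1 - \<eta>)) * (\<lambda>v. 0) v)"
    unfolding q'_def using eta by (auto simp: of_real_eq_iff)
  moreover have "0 < 1 - \<eta>" "1 - \<eta> < 1" using eta by auto
  ultimately have "q' = (\<lambda>v. 0)" using ExtD[OF q q'B zero_BE] by blast
  then have q0: "q = (\<lambda>v. 0)" unfolding q'_def using eta by (auto simp: fun_eq_iff)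
  obtain p0 where p0: "p0 \<in> BE" "p0 e0 = of_real (norm e0)" using norming by blast
  have mp0: "(\<lambda>v. - p0 v) \<in> BE" using p0(1) by (simp add: BE_iff)
  have "q = (\<lambda>v. of_real (1/2) * p0 v + of_real (1 - 1/2) * (\<lambda>v. - p0 v) v)"
    using q0 by (auto simp: fun_eq_iff algebra_simps)
  moreover have "(0::real) < 1/2" "(1/2::real) < 1" by auto
  ultimately have "p0 = (\<lambda>v. - p0 v)" using ExtD[OF q p0(1) mp0] by blast
  then have "p0 e0 = - p0 e0" by metis
  then have "p0 e0 = 0" by simp
  then show False using p0(2) e0 by simp
qed

lemma Ext_norm1:
  assumes q: "q \<in> Ext UNIV norm sm" and e0: "(e0::'e) \<noteq> 0" and eta: "0 < \<eta>"
  shows "\<exists>e. norm e \<le> 1 \<and> re (q e) > 1 - \<eta>"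
proof -
  have "min \<eta> (1/2) < 1" "0 < min \<eta> (1/2)" using eta by auto
  then obtain e where "norm e \<le> 1" "re (q e) > 1 - min \<eta> (1/2)"
    using Ext_norm1_aux[OF q e0] by blast
  then show ?thesis by (intro exI[of _ e]) auto
qed

end

locale fspace = kspace re sm for re :: "'k::{real_normed_field,heine_borel} \<Rightarrow> real"
    and sm :: "'k \<Rightarrow> 'e::real_normed_vector \<Rightarrow> 'e" +
  fixes S :: "('a \<Rightarrow> 'e) set"
  assumes S_const: "(\<lambda>y. e) \<in> S"
    and S_add: "f \<in> S \<Longrightarrow> g \<in> S \<Longrightarrow> (\<lambda>y. f y + g y) \<in> S"
    and S_sm: "f \<in> S \<Longrightarrow> (\<lambda>y. sm c (f y)) \<in> S"
    and S_cut: "f \<in> S \<Longrightarrow> g \<in> S \<Longrightarrow> \<epsilon> > 0 \<Longrightarrow> (\<lambda>y. max 0 (1 - norm (g y) / \<epsilon>) *\<^sub>R f y) \<in> S"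
    and S_bdd: "f \<in> S \<Longrightarrow> bounded (range f)"
begin

abbreviation "BA \<equiv> dual_ball S supnorm (fsm sm)"

lemma supnorm_ge: assumes "f \<in> S" shows "norm (f y) \<le> supnorm f"
proof -
  have "bdd_above (range (\<lambda>x. norm (f x)))"
    using S_bdd[OF assms] unfolding bounded_iff bdd_above_def by (auto simp: image_iff) 
  then show ?thesis unfolding supnorm_def by (intro cSUP_upper) auto
qed

lemma supnorm_le: assumes "\<And>y. norm (f y) \<le> C" shows "supnorm f \<le> C"
  unfolding supnorm_def using assms by (intro cSUP_least) auto

lemma supnorm_const: "supnorm (\<lambda>y::'a. e) = norm e"
  unfolding supnorm_def by simp

lemma BA_add: assumes "p \<in> BA" "f \<in> S" "g \<in> S" shows "p (\<lambda>y. f y + g y) = p f + p g"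
proof -
  have "p (f + g) = p f + p g" using assms unfolding dual_ball_def by blast
  moreover have "f + g = (\<lambda>y. f y + g y)" by (simp add: plus_fun_def)
  ultimately show ?thesis by simp
qed
lemma BA_sm: assumes "p \<in> BA" "f \<in> S" shows "p (\<lambda>y. sm c (f y)) = c * p f"
proof -
  have "p (fsm sm c f) = c * p f" using assms unfolding dual_ball_def by blast
  then show ?thesis by (simp add: fsm_def)
qed
lemma BA_norm: "p \<in> BA \<Longrightarrow> f \<in> S \<Longrightarrow> norm (p f) \<le> supnorm f"
  unfolding dual_ball_def by auto
lemma BA_out: "p \<in> BA \<Longrightarrow> f \<notin> S \<Longrightarrow> p f = 0"
  unfolding dual_ball_def by auto

definition Phi :: "('e \<Rightarrow> 'k) \<Rightarrow> 'a \<Rightarrow> ('a \<Rightarrow> 'e) \<Rightarrow> 'k" where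
  "Phi q x = (\<lambda>f. if f \<in> S then q (f x) else 0)"

lemma S_add': "f \<in> S \<Longrightarrow> g \<in> S \<Longrightarrow> f + g \<in> S"
  using S_add[of f g] by (simp add: plus_fun_def)

lemma S_sm': "f \<in> S \<Longrightarrow> fsm sm c f \<in> S"
  using S_sm[of f c] by (simp add: fsm_def)

lemma Phi_BA: assumes q: "q \<in> BE" shows "Phi q x \<in> BA"
proof -
  have "Phi q x (v + w) = Phi q x v + Phi q x w" if "v \<in> S" "w \<in> S" for v w
    using that S_add'[OF that] BE_add[OF q] unfolding Phi_def by simp
  moreover have "Phi q x (fsm sm c v) = c * Phi q x v" if "v \<in> S" for c v
    using that S_sm'[OF that] BE_sm[OF q] unfolding Phi_def by (simp add: fsm_def)
  moreover have "norm (Phi q x v) \<le> supnorm v" if "v \<in> S" for v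
    using that BE_norm[OF q, of "v x"] supnorm_ge[OF that, of x] unfolding Phi_def by simp
  moreover have "Phi q x v = 0" if "v \<notin> S" for v
    using that unfolding Phi_def by simp
  ultimately show ?thesis unfolding dual_ball_def by blast
qed

end

context fspace begin

lemma C1:
  assumes q: "q \<in> Ext UNIV norm sm" and e0: "(e0::'e) \<noteq> 0"
    and \<phi>: "\<phi> \<in> BA" and \<psi>: "\<psi> \<in> BA" and t: "0 < t" "t < 1"
    and eq: "Phi q x = (\<lambda>v. of_real t * \<phi> v + of_real (1 - t) * \<psi> v)"
    and g: "g \<in> S" "g x = 0"
  shows "\<phi> g = 0"
proof -
  have main: "norm (\<phi> g) \<le> \<epsilon>" if \<epsilon>: "\<epsilon> > 0" for \<epsilon>
  proof -
    define u where "u = (\<lambda>y. max 0 (1 - norm (g y) / \<epsilon>))"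
    have u0: "0 \<le> u y" for y unfolding u_def by simp
    have u1: "u y \<le> 1" for y unfolding u_def using \<epsilon> by (simp add: divide_nonneg_pos)
    have ux: "u x = 1" unfolding u_def using g(2) by simp
    have ug_small: "norm (u y *\<^sub>R g y) \<le> \<epsilon>" for y
    proof (cases "norm (g y) < \<epsilon>")
      case True
      have "norm (u y *\<^sub>R g y) = u y * norm (g y)" using u0[of y] by simp
      also have "\<dots> \<le> 1 * norm (g y)" using u1[of y] by (intro mult_right_mono) auto
      finally show ?thesis using True by simp
    next
      case False
      then have "1 - norm (g y) / \<epsilon> \<le> 0" using \<epsilon> by (simp add: field_simps)
      then have "u y = 0" unfolding u_def by simp
      then show ?thesis using \<epsilon> by simp
    qed
    define ug where "ug = (\<lambda>y. u y *\<^sub>R g y)"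
    have ugS: "ug \<in> S" unfolding ug_def u_def using S_cut[OF g(1) g(1) \<epsilon>] .
    define wg where "wg = (\<lambda>y. (1 - u y) *\<^sub>R g y)"
    have wg_eq: "wg = (\<lambda>y. g y + sm (-1) (ug y))"
      by (auto simp: wg_def ug_def sm_neg1 algebra_simps)
    have wgS: "wg \<in> S" unfolding wg_eq using S_add[OF g(1) S_sm[OF ugS]] .
    have gsplit: "g = (\<lambda>y. ug y + wg y)"
      by (auto simp: ug_def wg_def scaleR_left_distrib[symmetric])
    have wg0: "\<phi> wg = 0"
    proof (rule ccontr)
      assume d: "\<phi> wg \<noteq> 0"
      define c where "c = supnorm g + 1"
      have sg: "0 \<le> supnorm g" using supnorm_ge[OF g(1), of x] norm_ge_zero[of "g x"] by linarith
      then have c: "c > 0" "supnorm g \<le> c" unfolding c_def by auto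
      obtain l where l: "norm l = 1" "l * \<phi> wg = of_real (norm (\<phi> wg))" using rotation by blast
      define l' where "l' = of_real (1/c) * l"
      have nl': "norm l' = 1 / c" unfolding l'_def using l c by (simp only: norm_mult norm_of_real) simp
      define \<eta> where "\<eta> = t * norm (\<phi> wg) / c"
      have \<eta>: "\<eta> > 0" unfolding \<eta>_def using t c d by simp
      obtain e where e: "norm e \<le> 1" "re (q e) > 1 - \<eta>" using Ext_norm1[OF q e0 \<eta>] by blast
      define uf where "uf = (\<lambda>y. u y *\<^sub>R e)"
      have ufS: "uf \<in> S" unfolding uf_def u_def using S_cut[OF S_const g(1) \<epsilon>] .
      define F where "F = (\<lambda>y. uf y + sm l' (wg y))"
      have FS: "F \<in> S" unfolding F_def using S_add[OF ufS S_sm[OF wgS]] .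
      have "\<phi> F = \<phi> uf + l' * \<phi> wg"
        unfolding F_def using BA_add[OF \<phi> ufS S_sm[OF wgS]] BA_sm[OF \<phi> wgS] by simp
      also have "l' * \<phi> wg = of_real (1/c) * (l * \<phi> wg)" unfolding l'_def by simp
      also have "\<dots> = of_real (norm (\<phi> wg) / c)" using l(2) by simp
      finally have \<phi>F: "\<phi> F = \<phi> uf + of_real (norm (\<phi> wg) / c)" .
      have Fn: "supnorm F \<le> 1"
      proof (rule supnorm_le)
        fix y
        have "norm (F y) \<le> norm (uf y) + norm (sm l' (wg y))" unfolding F_def by (rule norm_triangle_ineq)
        also have "norm (uf y) = u y * norm e" unfolding uf_def using u0[of y] by simp
        also have "norm (sm l' (wg y)) = (1/c) * ((1 - u y) * norm (g y))"
          unfolding wg_def using nl' u1[of y] by (simp add: sm_norm)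
        also have "u y * norm e \<le> u y" using e(1) u0[of y] by (simp add: mult_left_le)
        also have "(1/c) * ((1 - u y) * norm (g y)) \<le> (1/c) * ((1 - u y) * c)"
          using supnorm_ge[OF g(1), of y] c u1[of y] by (intro mult_left_mono) auto
        also have "(1/c) * ((1 - u y) * c) = 1 - u y" using c by simp
        finally show "norm (F y) \<le> 1" by simp
      qed
      have "re (\<phi> F) \<le> 1" using re_le[of "\<phi> F"] BA_norm[OF \<phi> FS] Fn by linarith
      moreover have "re (\<phi> F) = re (\<phi> uf) + norm (\<phi> wg) / c"
        unfolding \<phi>F by (simp only: re_add re_of_real)
      ultimately have A1: "re (\<phi> uf) + norm (\<phi> wg) / c \<le> 1" by simp
      have ufn: "supnorm uf \<le> 1"
      proof (rule supnorm_le)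
        fix y show "norm (uf y) \<le> 1" unfolding uf_def using u0[of y] u1[of y] e(1)
          by (simp add: mult_le_one)
      qed
      have A2: "re (\<psi> uf) \<le> 1" using re_le[of "\<psi> uf"] BA_norm[OF \<psi> ufS] ufn by linarith
      have "Phi q x uf = q e" unfolding Phi_def uf_def using ufS ux unfolding uf_def by simp
      then have "q e = of_real t * \<phi> uf + of_real (1 - t) * \<psi> uf" using fun_cong[OF eq, of uf] by simp
      then have "re (q e) = t * re (\<phi> uf) + (1 - t) * re (\<psi> uf)" using re_conv by simp
      also have "\<dots> \<le> t * (1 - norm (\<phi> wg) / c) + (1 - t) * 1"
        using A1 A2 t by (intro add_mono mult_left_mono) auto
      also have "\<dots> = 1 - \<eta>" unfolding \<eta>_def by (simp add: algebra_simps)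
      finally show False using e(2) by simp
    qed
    have "\<phi> g = \<phi> ug + \<phi> wg" using BA_add[OF \<phi> ugS wgS] gsplit by simp
    then have "\<phi> g = \<phi> ug" using wg0 by simp
    moreover have "norm (\<phi> ug) \<le> supnorm ug" by (rule BA_norm[OF \<phi> ugS])
    moreover have "supnorm ug \<le> \<epsilon>" unfolding ug_def by (rule supnorm_le) (rule ug_small)
    ultimately show ?thesis by simp
  qed
  show ?thesis
  proof (rule ccontr)
    assume "\<phi> g \<noteq> 0"
    then have "norm (\<phi> g) > 0" by simp
    then show False using main[of "norm (\<phi> g) / 2"] by simp
  qed
qed

end

context fspace begin

lemma split_at: assumes f: "f \<in> S"
  shows "(\<lambda>y. f y + sm (-1) (f x)) \<in> S" "(\<lambda>y. f y + sm (-1) (f x)) x = 0"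
    "f = (\<lambda>y. (\<lambda>y. f y + sm (-1) (f x)) y + (\<lambda>y. f x) y)"
proof -
  show "(\<lambda>y. f y + sm (-1) (f x)) \<in> S" by (rule S_add[OF f S_const])
  show "(\<lambda>y. f y + sm (-1) (f x)) x = 0" by (simp add: sm_neg1)
  show "f = (\<lambda>y. (\<lambda>y. f y + sm (-1) (f x)) y + (\<lambda>y. f x) y)" by (simp add: sm_neg1)
qed

lemma BA_const: assumes p: "p \<in> BA" shows "(\<lambda>e. p (\<lambda>y. e)) \<in> BE"
  unfolding BE_iff
proof (intro conjI allI)
  fix v w show "p (\<lambda>y. v + w) = p (\<lambda>y. v) + p (\<lambda>y. w)" using BA_add[OF p S_const S_const] by simp
next
  fix c v show "p (\<lambda>y. sm c v) = c * p (\<lambda>y. v)" using BA_sm[OF p S_const] by simp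
next
  fix v show "norm (p (\<lambda>y. v)) \<le> norm v" using BA_norm[OF p S_const] supnorm_const by metis
qed

lemma BA_local: assumes p: "p \<in> BA" and f: "f \<in> S" and loc: "\<And>g. g \<in> S \<Longrightarrow> g x = 0 \<Longrightarrow> p g = 0"
  shows "p f = p (\<lambda>y. f x)"
proof -
  have "p f = p (\<lambda>y. f y + sm (-1) (f x)) + p (\<lambda>y. f x)"
    using split_at[OF f] BA_add[OF p split_at(1)[OF f] S_const] by metis
  then show ?thesis using loc[OF split_at(1,2)[OF f]] by simp
qed

lemma Phi_Ext: assumes q: "q \<in> Ext UNIV norm sm" and e0: "(e0::'e) \<noteq> 0"
  shows "Phi q x \<in> Ext S supnorm (fsm sm)"
  unfolding Ext_def
proof (intro CollectI conjI allI impI)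
  show "Phi q x \<in> BA" using Phi_BA Ext_BE[OF q] by blast
  fix \<phi> \<psi> and t :: real
  assume h: "\<phi> \<in> BA \<and> \<psi> \<in> BA \<and> 0 < t \<and> t < 1 \<and> Phi q x = (\<lambda>v. of_real t * \<phi> v + of_real (1 - t) * \<psi> v)"
  then have \<phi>: "\<phi> \<in> BA" and \<psi>: "\<psi> \<in> BA" and t: "0 < t" "t < 1"
    and eq: "Phi q x = (\<lambda>v. of_real t * \<phi> v + of_real (1 - t) * \<psi> v)" by auto
  have eq2: "Phi q x = (\<lambda>v. of_real (1 - t) * \<psi> v + of_real (1 - (1 - t)) * \<phi> v)"
    unfolding eq by (auto simp: fun_eq_iff)
  have t2: "0 < 1 - t" "1 - t < 1" using t by auto
  have l\<phi>: "\<phi> f = \<phi> (\<lambda>y. f x)" if "f \<in> S" for f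
    using BA_local[OF \<phi> that] C1[OF q e0 \<phi> \<psi> t eq] by blast
  have l\<psi>: "\<psi> f = \<psi> (\<lambda>y. f x)" if "f \<in> S" for f
    using BA_local[OF \<psi> that] C1[OF q e0 \<psi> \<phi> t2 eq2] by blast
  have "q = (\<lambda>e. of_real t * (\<lambda>e. \<phi> (\<lambda>y. e)) e + of_real (1 - t) * (\<lambda>e. \<psi> (\<lambda>y. e)) e)"
  proof
    fix e
    have "Phi q x (\<lambda>y. e) = q e" unfolding Phi_def using S_const by simp
    then show "q e = of_real t * (\<lambda>e. \<phi> (\<lambda>y. e)) e + of_real (1 - t) * (\<lambda>e. \<psi> (\<lambda>y. e)) e"
      using fun_cong[OF eq, of "\<lambda>y. e"] by simp
  qed
  then have ce: "(\<lambda>e. \<phi> (\<lambda>y. e)) = (\<lambda>e. \<psi> (\<lambda>y. e))"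
    using ExtD[OF q BA_const[OF \<phi>] BA_const[OF \<psi>] t] by blast
  show "\<phi> = \<psi>"
  proof
    fix f
    show "\<phi> f = \<psi> f"
    proof (cases "f \<in> S")
      case True
      then show ?thesis using l\<phi>[OF True] l\<psi>[OF True] fun_cong[OF ce, of "f x"] by simp
    next
      case False
      then show ?thesis using BA_out[OF \<phi>] BA_out[OF \<psi>] by simp
    qed
  qed
qed

lemma mult_slice:
  assumes m: "multiplier_with S supnorm (fsm sm) T a" and e0: "(e0::'e) \<noteq> 0"
  shows "multiplier_with UNIV norm sm (\<lambda>e. T (\<lambda>y. e) x) (\<lambda>q. a (Phi q x))"
proof -
  have bo: "bounded_op S supnorm (fsm sm) T" and mu: "\<forall>p\<in>Ext S supnorm (fsm sm). \<forall>v\<in>S. p (T v) = a p * p v"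
    using m unfolding multiplier_with_def by auto
  have TS: "T v \<in> S" if "v \<in> S" for v using bo that unfolding bounded_op_def by blast
  have Tadd: "T (v + w) = T v + T w" if "v \<in> S" "w \<in> S" for v w using bo that unfolding bounded_op_def by blast
  have Tsm: "T (fsm sm c v) = fsm sm c (T v)" if "v \<in> S" for c v using bo that unfolding bounded_op_def by blast
  obtain C where C: "\<And>v. v \<in> S \<Longrightarrow> supnorm (T v) \<le> C * supnorm v" using bo unfolding bounded_op_def by blast
  have "bounded_op UNIV norm sm (\<lambda>e. T (\<lambda>y. e) x)"
    unfolding bounded_op_def
  proof (intro conjI ballI allI exI)
    fix v w :: 'e
    have "(\<lambda>y::'a. v + w) = (\<lambda>y. v) + (\<lambda>y. w)" by (simp add: plus_fun_def)
    then show "T (\<lambda>y. v + w) x = T (\<lambda>y. v) x + T (\<lambda>y. w) x" using Tadd[OF S_const S_const] by simp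
  next
    fix c and v :: 'e
    have "(\<lambda>y::'a. sm c v) = fsm sm c (\<lambda>y. v)" by (simp add: fsm_def)
    then show "T (\<lambda>y. sm c v) x = sm c (T (\<lambda>y. v) x)" using Tsm[OF S_const] by (simp add: fsm_def)
  next
    fix v :: 'e
    show "norm (T (\<lambda>y. v) x) \<le> C * norm v"
      using supnorm_ge[OF TS[OF S_const[of v]], where y=x] C[OF S_const[of v]] supnorm_const[of v] by (metis order_trans)
  qed auto
  moreover have "q (T (\<lambda>y. e) x) = a (Phi q x) * q e" if "q \<in> Ext UNIV norm sm" for q e
  proof -
    have "Phi q x (T (\<lambda>y. e)) = a (Phi q x) * Phi q x (\<lambda>y. e)"
      using mu Phi_Ext[OF that e0] S_const by blast
    then show ?thesis unfolding Phi_def using TS[OF S_const] S_const by simp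
  qed
  ultimately show ?thesis unfolding multiplier_with_def by blast
qed

theorem main:
  assumes T: "T \<in> centralizer S supnorm (fsm sm) cj"
    and Z: "centralizer (UNIV::'e set) norm sm cj = {T. \<exists>c. T = sm c}"
    and e0: "(e0::'e) \<noteq> 0"
  shows "\<exists>h. \<forall>f\<in>S. T f = (\<lambda>x. sm (h x) (f x))"
proof -
  obtain U a where mT: "multiplier_with S supnorm (fsm sm) T a"
    and mU: "multiplier_with S supnorm (fsm sm) U (\<lambda>p. cj (a p))"
    using T unfolding centralizer_def by blast
  have "\<exists>c. (\<lambda>e. T (\<lambda>y. e) x) = sm c" for x
  proof -
    have "(\<lambda>e. T (\<lambda>y. e) x) \<in> centralizer (UNIV::'e set) norm sm cj"
      unfolding centralizer_def using mult_slice[OF mT e0, where x=x] mult_slice[OF mU e0, where x=x] by blast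
    then show ?thesis using Z by blast
  qed
  then obtain h where h: "\<And>x. (\<lambda>e. T (\<lambda>y. e) x) = sm (h x)" by metis
  have bo: "bounded_op S supnorm (fsm sm) T" and mu: "\<forall>p\<in>Ext S supnorm (fsm sm). \<forall>v\<in>S. p (T v) = a p * p v"
    using mT unfolding multiplier_with_def by auto
  have TS: "T v \<in> S" if "v \<in> S" for v using bo that unfolding bounded_op_def by blast
  have Tadd: "T (v + w) = T v + T w" if "v \<in> S" "w \<in> S" for v w using bo that unfolding bounded_op_def by blast
  have "T f x = sm (h x) (f x)" if f: "f \<in> S" for f x
  proof -
    define g where "g = (\<lambda>y. f y + sm (-1) (f x))"
    have gS: "g \<in> S" and gx: "g x = 0" unfolding g_def using split_at[OF f] by auto
    have fe: "f = g + (\<lambda>y. f x)" using split_at(3)[OF f] unfolding g_def plus_fun_def by simp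
    have Tf: "T f x = T g x + T (\<lambda>y. f x) x" using Tadd[OF gS S_const] fe by (metis plus_fun_def)
    have Tgx: "T g x = 0"
    proof (rule ccontr)
      assume "T g x \<noteq> 0"
      then obtain q where q: "q \<in> Ext UNIV norm sm" "q (T g x) \<noteq> 0" using ext_sep by blast
      have "Phi q x (T g) = a (Phi q x) * Phi q x g" using mu Phi_Ext[OF q(1) e0] gS by blast
      then have "q (T g x) = a (Phi q x) * q (g x)" unfolding Phi_def using gS TS[OF gS] by simp
      then show False using q(2) gx BE_zero[OF Ext_BE[OF q(1)]] by simp
    qed
    have "T (\<lambda>y. f x) x = sm (h x) (f x)" using fun_cong[OF h[of x], of "f x"] by simp
    then show ?thesis using Tf Tgx by simp
  qed
  then show ?thesis by blast
qed

end

lemma ucont_dom: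
  fixes f :: "'a::metric_space \<Rightarrow> 'b::metric_space" and k :: "'a \<Rightarrow> 'c::metric_space"
  assumes f: "uniformly_continuous_on UNIV f" and L: "L > 0"
    and d: "\<And>x y. dist (k x) (k y) \<le> L * dist (f x) (f y)"
  shows "uniformly_continuous_on UNIV k"
  unfolding uniformly_continuous_on_def
proof (intro allI impI)
  fix e :: real assume e: "e > 0"
  obtain d0 where d0: "d0 > 0" "\<And>x x' :: 'a. dist x' x < d0 \<Longrightarrow> dist (f x') (f x) < e / L"
    using f e L unfolding uniformly_continuous_on_def by (metis UNIV_I divide_pos_pos)
  show "\<exists>d>0. \<forall>x\<in>UNIV. \<forall>x'\<in>UNIV. dist x' x < d \<longrightarrow> dist (k x') (k x) < e"
  proof (intro exI[of _ d0] conjI ballI impI)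
    show "d0 > 0" by (rule d0(1))
    fix x x' :: 'a assume "dist x' x < d0"
    then have "dist (f x') (f x) < e / L" by (rule d0(2))
    then have "L * dist (f x') (f x) < e" using L by (simp add: field_simps)
    then show "dist (k x') (k x) < e" using d[of x' x] by linarith
  qed
qed

lemma cont_dom:
  fixes f :: "'a::topological_space \<Rightarrow> 'b::metric_space" and k :: "'a \<Rightarrow> 'c::metric_space"
  assumes f: "continuous_on UNIV f" and L: "L > 0"
    and d: "\<And>x y. dist (k x) (k y) \<le> L * dist (f x) (f y)"
  shows "continuous_on UNIV k"
  unfolding continuous_on_def
proof (intro ballI)
  fix x :: 'a
  have ft: "(f \<longlongrightarrow> f x) (at x)" using f unfolding continuous_on_def by auto
  show "(k \<longlongrightarrow> k x) (at x within UNIV)"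
    unfolding tendsto_iff
  proof (intro allI impI)
    fix e :: real assume e: "e > 0"
    have "\<forall>\<^sub>F y in at x. dist (f y) (f x) < e / L" using ft e L unfolding tendsto_iff by auto
    then show "\<forall>\<^sub>F y in at x within UNIV. dist (k y) (k x) < e"
    proof (rule eventually_mono)
      fix y assume "dist (f y) (f x) < e / L"
      then have "L * dist (f y) (f x) < e" using L by (simp add: field_simps)
      then show "dist (k y) (k x) < e" using d[of y x] by linarith
    qed
  qed
qed

lemma ucont_scaleR:
  fixes u :: "'a::metric_space \<Rightarrow> real" and f :: "'a \<Rightarrow> 'b::real_normed_vector"
  assumes u: "uniformly_continuous_on UNIV u" and f: "uniformly_continuous_on UNIV f"
    and bu: "\<And>y. \<bar>u y\<bar> \<le> Bu" and bf: "\<And>y. norm (f y) \<le> Bf"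
  shows "uniformly_continuous_on UNIV (\<lambda>y. u y *\<^sub>R f y)"
  unfolding uniformly_continuous_on_def
proof (intro allI impI)
  fix e :: real assume e: "e > 0"
  define K where "K = Bu + Bf + 1"
  have Bu0: "Bu \<ge> 0" using bu[of undefined] by linarith
  have Bf0: "Bf \<ge> 0" using bf[of undefined] norm_ge_zero[of "f undefined"] by linarith
  have K: "K > 0" unfolding K_def using Bu0 Bf0 by linarith
  have eK: "e / (2 * K) > 0" using e K by simp
  obtain d1 where d1: "d1 > 0" "\<And>x x' :: 'a. dist x' x < d1 \<Longrightarrow> dist (u x') (u x) < e / (2 * K)"
    using u eK unfolding uniformly_continuous_on_def by (metis UNIV_I)
  obtain d2 where d2: "d2 > 0" "\<And>x x' :: 'a. dist x' x < d2 \<Longrightarrow> dist (f x') (f x) < e / (2 * K)"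
    using f eK unfolding uniformly_continuous_on_def by (metis UNIV_I)
  show "\<exists>d>0. \<forall>x\<in>UNIV. \<forall>x'\<in>UNIV. dist x' x < d \<longrightarrow> dist (u x' *\<^sub>R f x') (u x *\<^sub>R f x) < e"
  proof (intro exI[of _ "min d1 d2"] conjI ballI impI)
    show "min d1 d2 > 0" using d1 d2 by simp
    fix x x' :: 'a assume "dist x' x < min d1 d2"
    then have a: "\<bar>u x' - u x\<bar> < e / (2 * K)" and b: "norm (f x' - f x) < e / (2 * K)"
      using d1(2)[of x' x] d2(2)[of x' x] by (auto simp: dist_norm)
    have "u x' *\<^sub>R f x' - u x *\<^sub>R f x = (u x' - u x) *\<^sub>R f x' + u x *\<^sub>R (f x' - f x)"
      by (simp add: algebra_simps)
    then have "dist (u x' *\<^sub>R f x') (u x *\<^sub>R f x) \<le> \<bar>u x' - u x\<bar> * norm (f x') + \<bar>u x\<bar> * norm (f x' - f x)"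
      by (metis dist_norm norm_scaleR norm_triangle_ineq real_norm_def)
    also have "\<dots> \<le> e / (2 * K) * Bf + Bu * (e / (2 * K))"
      using a b bu[of x] bf[of x'] by (intro add_mono mult_mono) auto
    also have "\<dots> = e * (Bf + Bu) / (2 * K)" by (simp add: algebra_simps add_divide_distrib)
    also have "\<dots> < e"
    proof -
      have "Bf + Bu < 2 * K" unfolding K_def using Bu0 Bf0 by (simp add: algebra_simps)
      then have "e * (Bf + Bu) < e * (2 * K)" using e by simp
      then show ?thesis using K by (simp add: pos_divide_less_eq)
    qed
    finally show "dist (u x' *\<^sub>R f x') (u x *\<^sub>R f x) < e" .
  qed
qed

context kspace begin

lemma sm_diff2: "sm c (x - y) = sm c x - sm c y"
  using sm_add2[of c "x - y" y] by (simp add: algebra_simps)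

lemma sm_diff1: "sm (a - b) x = sm a x - sm b x"
  using sm_add1[of "a - b" b x] by (simp add: algebra_simps)

lemma sm_bl: "bounded_linear (sm c)"
proof (rule bounded_linear_intro[where K="norm c"])
  show "sm c (x + y) = sm c x + sm c y" for x y by (rule sm_add2)
  show "sm c (r *\<^sub>R x) = r *\<^sub>R sm c x" for r x
    by (metis sm_mult sm_real mult.commute)
  show "norm (sm c x) \<le> norm x * norm c" for x by (simp add: sm_norm)
qed

lemma bnd_iff: "bounded (range f) \<longleftrightarrow> (\<exists>B. \<forall>y. norm (f y) \<le> B)"
  unfolding bounded_iff by auto

lemma cut_bound: assumes "\<epsilon> > 0" "\<And>y. norm (f y) \<le> (Bf::real)"
  shows "norm (max 0 (1 - norm (g y) / \<epsilon>) *\<^sub>R f y) \<le> Bf"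
proof -
  have m: "0 \<le> max 0 (1 - norm (g y) / \<epsilon>)" "max 0 (1 - norm (g y) / \<epsilon>) \<le> 1"
    using assms(1) by auto
  have "norm (max 0 (1 - norm (g y) / \<epsilon>) *\<^sub>R f y) = max 0 (1 - norm (g y) / \<epsilon>) * norm (f y)"
    using m by simp
  also have "\<dots> \<le> 1 * norm (f y)" using m by (intro mult_right_mono) auto
  also have "\<dots> \<le> Bf" using assms(2)[of y] by simp
  finally show ?thesis .
qed

lemma fspace_Cb: "fspace re sm (Cb :: ('x::topological_space \<Rightarrow> 'e) set)"
proof (intro fspace.intro fspace_axioms.intro)
  show "kspace re sm" by (rule kspace_axioms)
next
  fix e :: 'e show "(\<lambda>y::'x. e) \<in> Cb" unfolding Cb_def bnd_iff by (auto intro: continuous_on_const)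
next
  fix f g :: "'x \<Rightarrow> 'e" assume "f \<in> Cb" "g \<in> Cb"
  then obtain Bf Bg where b: "\<And>y. norm (f y) \<le> Bf" "\<And>y. norm (g y) \<le> Bg" and c: "continuous_on UNIV f" "continuous_on UNIV g"
    unfolding Cb_def bnd_iff by auto
  have "continuous_on UNIV (\<lambda>y. f y + g y)" using c by (intro continuous_on_add)
  moreover have "norm (f y + g y) \<le> Bf + Bg" for y using b[of y] norm_triangle_ineq[of "f y" "g y"] by linarith
  ultimately show "(\<lambda>y. f y + g y) \<in> Cb" unfolding Cb_def bnd_iff by auto
next
  fix f :: "'x \<Rightarrow> 'e" and c assume "f \<in> Cb"
  then obtain Bf where b: "\<And>y. norm (f y) \<le> Bf" and co: "continuous_on UNIV f"
    unfolding Cb_def bnd_iff by auto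
  have "continuous_on UNIV (\<lambda>y. sm c (f y))" using bounded_linear.continuous_on[OF sm_bl co] .
  moreover have "norm (sm c (f y)) \<le> norm c * Bf" for y using b[of y] by (simp add: sm_norm mult_left_mono)
  ultimately show "(\<lambda>y. sm c (f y)) \<in> Cb" unfolding Cb_def bnd_iff by auto
next
  fix f g :: "'x \<Rightarrow> 'e" and \<epsilon> :: real assume "f \<in> Cb" "g \<in> Cb" "\<epsilon> > 0"
  then obtain Bf where b: "\<And>y. norm (f y) \<le> Bf" and c: "continuous_on UNIV f" "continuous_on UNIV g"
    unfolding Cb_def bnd_iff by auto
  have "continuous_on UNIV (\<lambda>y. max 0 (1 - norm (g y) / \<epsilon>))"
    using c(2) \<open>\<epsilon> > 0\<close> by (intro continuous_intros) auto
  then have "continuous_on UNIV (\<lambda>y. max 0 (1 - norm (g y) / \<epsilon>) *\<^sub>R f y)"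
    using c(1) by (intro continuous_on_scaleR)
  moreover have "norm (max 0 (1 - norm (g y) / \<epsilon>) *\<^sub>R f y) \<le> Bf" for y
    using cut_bound[OF \<open>\<epsilon> > 0\<close> b] .
  ultimately show "(\<lambda>y. max 0 (1 - norm (g y) / \<epsilon>) *\<^sub>R f y) \<in> Cb" unfolding Cb_def bnd_iff by auto
next
  fix f :: "'x \<Rightarrow> 'e" assume "f \<in> Cb" then show "bounded (range f)" unfolding Cb_def by auto
qed

end

context kspace begin

lemma fspace_Cbu: "fspace re sm (Cbu :: ('x::metric_space \<Rightarrow> 'e) set)"
proof (intro fspace.intro fspace_axioms.intro)
  show "kspace re sm" by (rule kspace_axioms)
next
  fix e :: 'e show "(\<lambda>y::'x. e) \<in> Cbu" unfolding Cbu_def bnd_iff by (auto intro: uniformly_continuous_on_const)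
next
  fix f g :: "'x \<Rightarrow> 'e" assume "f \<in> Cbu" "g \<in> Cbu"
  then obtain Bf Bg where b: "\<And>y. norm (f y) \<le> Bf" "\<And>y. norm (g y) \<le> Bg" and c: "uniformly_continuous_on UNIV f" "uniformly_continuous_on UNIV g"
    unfolding Cbu_def bnd_iff by auto
  have "uniformly_continuous_on UNIV (\<lambda>y. f y + g y)" using c by (intro uniformly_continuous_on_add)
  moreover have "norm (f y + g y) \<le> Bf + Bg" for y using b[of y] norm_triangle_ineq[of "f y" "g y"] by linarith
  ultimately show "(\<lambda>y. f y + g y) \<in> Cbu" unfolding Cbu_def bnd_iff by auto
next
  fix f :: "'x \<Rightarrow> 'e" and c assume "f \<in> Cbu"
  then obtain Bf where b: "\<And>y. norm (f y) \<le> Bf" and co: "uniformly_continuous_on UNIV f"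
    unfolding Cbu_def bnd_iff by auto
  have "uniformly_continuous_on UNIV (\<lambda>y. sm c (f y))" using bounded_linear.uniformly_continuous_on[OF sm_bl co] .
  moreover have "norm (sm c (f y)) \<le> norm c * Bf" for y using b[of y] by (simp add: sm_norm mult_left_mono)
  ultimately show "(\<lambda>y. sm c (f y)) \<in> Cbu" unfolding Cbu_def bnd_iff by auto
next
  fix f g :: "'x \<Rightarrow> 'e" and \<epsilon> :: real assume "f \<in> Cbu" "g \<in> Cbu" and ep: "\<epsilon> > 0"
  then obtain Bf where b: "\<And>y. norm (f y) \<le> Bf" and c: "uniformly_continuous_on UNIV f" "uniformly_continuous_on UNIV g"
    unfolding Cbu_def bnd_iff by auto
  have "uniformly_continuous_on UNIV (\<lambda>y. max 0 (1 - norm (g y) / \<epsilon>))"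
  proof (rule ucont_dom[OF c(2)])
    show "1 / \<epsilon> > 0" using ep by simp
    fix a b
    have "dist (max 0 (1 - norm (g a) / \<epsilon>)) (max 0 (1 - norm (g b) / \<epsilon>)) \<le> \<bar>norm (g a) / \<epsilon> - norm (g b) / \<epsilon>\<bar>"
      unfolding dist_real_def by linarith
    also have "\<dots> = \<bar>norm (g a) - norm (g b)\<bar> / \<epsilon>" using ep by (simp add: diff_divide_distrib[symmetric])
    also have "\<dots> \<le> dist (g a) (g b) / \<epsilon>"
      using ep norm_triangle_ineq3[of "g a" "g b"] by (intro divide_right_mono) (auto simp: dist_norm)
    finally show "dist (max 0 (1 - norm (g a) / \<epsilon>)) (max 0 (1 - norm (g b) / \<epsilon>)) \<le> 1 / \<epsilon> * dist (g a) (g b)"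
      by simp
  qed
  then have "uniformly_continuous_on UNIV (\<lambda>y. max 0 (1 - norm (g y) / \<epsilon>) *\<^sub>R f y)"
    using c(1) b ep by (intro ucont_scaleR[where Bu=1 and Bf=Bf]) auto
  moreover have "norm (max 0 (1 - norm (g y) / \<epsilon>) *\<^sub>R f y) \<le> Bf" for y
    using cut_bound[OF ep b] .
  ultimately show "(\<lambda>y. max 0 (1 - norm (g y) / \<epsilon>) *\<^sub>R f y) \<in> Cbu" unfolding Cbu_def bnd_iff by auto
next
  fix f :: "'x \<Rightarrow> 'e" assume "f \<in> Cbu" then show "bounded (range f)" unfolding Cbu_def by auto
qed

lemma centr_maps: assumes "T \<in> centralizer S nm (fsm sm) cj" "v \<in> S" shows "T v \<in> S"
  using assms unfolding centralizer_def multiplier_with_def bounded_op_def by blast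

lemma h_dist:
  assumes e0: "(e0::'e) \<noteq> 0" and g: "\<forall>y. g y = sm (h y) e0"
  shows "dist (h a) (h b) \<le> (1 / norm e0) * dist (g a) (g b)"
proof -
  have "dist (g a) (g b) = norm (sm (h a - h b) e0)" using g unfolding dist_norm by (simp add: sm_diff1)
  then show ?thesis using e0 by (simp add: sm_norm dist_norm)
qed

lemma h_norm:
  assumes e0: "(e0::'e) \<noteq> 0" and g: "\<forall>y. g y = sm (h y) e0"
  shows "norm (h y) = norm (g y) / norm e0"
  using e0 g by (simp add: sm_norm)

lemma final_Cb:
  assumes Z: "Z_one_dim sm cj" and T: "T \<in> centralizer (Cb::('x::topological_space \<Rightarrow> 'e) set) supnorm (fsm sm) cj"
  shows "\<exists>h\<in>(Cb::('x \<Rightarrow> 'k) set). \<forall>f\<in>Cb. T f = (\<lambda>x. sm (h x) (f x))"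
proof (cases "\<exists>e0::'e. e0 \<noteq> 0")
  case False
  have "(\<lambda>x::'x. 0::'k) \<in> Cb" unfolding Cb_def bnd_iff by (auto intro: continuous_on_const)
  moreover have "T f = (\<lambda>x. sm 0 (f x))" for f
  proof (rule ext)
    fix x
    from False have "T f x = 0" "sm 0 (f x) = 0" by blast+
    then show "T f x = sm 0 (f x)" by simp
  qed
  ultimately show ?thesis by (intro bexI[of _ "\<lambda>x::'x. 0::'k"]) auto
next
  case True
  then obtain e0 :: 'e where e0: "e0 \<noteq> 0" by blast
  interpret F: fspace re sm "Cb :: ('x \<Rightarrow> 'e) set" by (rule fspace_Cb)
  obtain h where h: "\<forall>f\<in>Cb. T f = (\<lambda>x. sm (h x) (f x))"
    using F.main[OF T Z[unfolded Z_one_dim_def] e0] by blast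
  define g where "g = T (\<lambda>y. e0)"
  have gS: "g \<in> Cb" unfolding g_def using centr_maps[OF T F.S_const] .
  have gh: "g y = sm (h y) e0" for y unfolding g_def using h F.S_const by auto
  then have gh': "\<forall>y. g y = sm (h y) e0" by blast
  obtain B where B: "\<And>y. norm (g y) \<le> B" and gc: "continuous_on UNIV g" using gS unfolding Cb_def bnd_iff by auto
  have "continuous_on UNIV h"
    using cont_dom[OF gc _ h_dist[OF e0 gh']] e0 by simp
  moreover have "norm (h y) \<le> B / norm e0" for y
  proof -
    have "norm (h y) = norm (g y) / norm e0" using h_norm[OF e0 gh'] by blast
    then show ?thesis using B[of y] e0 by (simp add: divide_right_mono)
  qed
  ultimately have "h \<in> Cb" unfolding Cb_def bnd_iff by auto
  then show ?thesis using h by blast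
qed

lemma final_Cbu:
  assumes Z: "Z_one_dim sm cj" and T: "T \<in> centralizer (Cbu::('x::metric_space \<Rightarrow> 'e) set) supnorm (fsm sm) cj"
  shows "\<exists>h\<in>(Cbu::('x \<Rightarrow> 'k) set). \<forall>f\<in>Cbu. T f = (\<lambda>x. sm (h x) (f x))"
proof (cases "\<exists>e0::'e. e0 \<noteq> 0")
  case False
  have "(\<lambda>x::'x. 0::'k) \<in> Cbu" unfolding Cbu_def bnd_iff by (auto intro: uniformly_continuous_on_const)
  moreover have "T f = (\<lambda>x. sm 0 (f x))" for f
  proof (rule ext)
    fix x
    from False have "T f x = 0" "sm 0 (f x) = 0" by blast+
    then show "T f x = sm 0 (f x)" by simp
  qed
  ultimately show ?thesis by (intro bexI[of _ "\<lambda>x::'x. 0::'k"]) auto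
next
  case True
  then obtain e0 :: 'e where e0: "e0 \<noteq> 0" by blast
  interpret F: fspace re sm "Cbu :: ('x \<Rightarrow> 'e) set" by (rule fspace_Cbu)
  obtain h where h: "\<forall>f\<in>Cbu. T f = (\<lambda>x. sm (h x) (f x))"
    using F.main[OF T Z[unfolded Z_one_dim_def] e0] by blast
  define g where "g = T (\<lambda>y. e0)"
  have gS: "g \<in> Cbu" unfolding g_def using centr_maps[OF T F.S_const] .
  have gh: "g y = sm (h y) e0" for y unfolding g_def using h F.S_const by auto
  then have gh': "\<forall>y. g y = sm (h y) e0" by blast
  obtain B where B: "\<And>y. norm (g y) \<le> B" and gc: "uniformly_continuous_on UNIV g" using gS unfolding Cbu_def bnd_iff by auto
  have "uniformly_continuous_on UNIV h"
    using ucont_dom[OF gc _ h_dist[OF e0 gh']] e0 by simp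
  moreover have "norm (h y) \<le> B / norm e0" for y
  proof -
    have "norm (h y) = norm (g y) / norm e0" using h_norm[OF e0 gh'] by blast
    then show ?thesis using B[of y] e0 by (simp add: divide_right_mono)
  qed
  ultimately have "h \<in> Cbu" unfolding Cbu_def bnd_iff by auto
  then show ?thesis using h by blast
qed

end

lemma kfield_real: "kfield (\<lambda>x::real. x)"
  by unfold_locales auto

lemma kfield_complex: "kfield Re"
  by unfold_locales (auto simp: complex_Re_le_cmod)

lemma kspace_real: "kspace (\<lambda>x::real. x) (scaleR :: real \<Rightarrow> 'e::real_normed_vector \<Rightarrow> 'e)"
proof (intro kspace.intro kfield_real kspace_axioms.intro)
  fix v :: 'e
  obtain \<rho> where r: "linear \<rho>" "\<And>w. \<bar>\<rho> w\<bar> \<le> norm w" "\<rho> v = norm v" using real_HB[of v] by blast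
  have "\<rho> \<in> dual_ball UNIV norm scaleR"
    unfolding dual_ball_def using r by (auto simp: linear_add linear_scale)
  then show "\<exists>p\<in>dual_ball UNIV norm scaleR. p v = of_real (norm v)" using r(3) by auto
qed (auto simp: scaleR_add_left scaleR_add_right)

lemma cs_decomp: assumes cs: "complex_scaling sm"
  shows "sm c w = Re c *\<^sub>R w + Im c *\<^sub>R sm \<i> w"
proof -
  have A1: "\<And>a b x. sm (a + b) x = sm a x + sm b x" and A3: "\<And>a b x. sm (a * b) x = sm a (sm b x)"
    and A6: "\<And>r x. sm (complex_of_real r) x = r *\<^sub>R x"
    using cs unfolding complex_scaling_def by auto
  have "c = complex_of_real (Re c) + complex_of_real (Im c) * \<i>" by (simp add: complex_eq_iff)
  then have "sm c w = sm (complex_of_real (Re c) + complex_of_real (Im c) * \<i>) w" by simp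
  also have "\<dots> = Re c *\<^sub>R w + Im c *\<^sub>R sm \<i> w" by (simp only: A1 A3 A6)
  finally show ?thesis .
qed

lemma kspace_complex: assumes cs: "complex_scaling (sm :: complex \<Rightarrow> 'e::real_normed_vector \<Rightarrow> 'e)"
  shows "kspace Re sm"
proof -
  have A1: "\<And>a b x. sm (a + b) x = sm a x + sm b x" and A2: "\<And>a x y. sm a (x + y) = sm a x + sm a y"
    and A3: "\<And>a b x. sm (a * b) x = sm a (sm b x)" and A4: "\<And>x. sm 1 x = x"
    and A5: "\<And>a x. norm (sm a x) = cmod a * norm x"
    and A6: "\<And>r x. sm (complex_of_real r) x = r *\<^sub>R x"
    using cs unfolding complex_scaling_def by auto
  show ?thesis
  proof (intro kspace.intro kfield_complex kspace_axioms.intro)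
    fix v :: 'e
    obtain \<rho> where r: "linear \<rho>" "\<And>w. \<bar>\<rho> w\<bar> \<le> norm w" "\<rho> v = norm v" using real_HB[of v] by blast
    define p where "p = (\<lambda>w. Complex (\<rho> w) (- \<rho> (sm \<i> w)))"
    have padd: "p (x + y) = p x + p y" for x y
      unfolding p_def by (simp add: A2 linear_add[OF r(1)] complex_eq_iff)
    have psm: "p (sm c w) = c * p w" for c w
    proof -
      have "sm \<i> (sm c w) = sm (\<i> * c) w" by (simp add: A3)
      also have "\<dots> = Re (\<i> * c) *\<^sub>R w + Im (\<i> * c) *\<^sub>R sm \<i> w" by (rule cs_decomp[OF cs])
      finally have e2: "sm \<i> (sm c w) = (- Im c) *\<^sub>R w + Re c *\<^sub>R sm \<i> w" by simp
      have e1: "sm c w = Re c *\<^sub>R w + Im c *\<^sub>R sm \<i> w" by (rule cs_decomp[OF cs])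
      show ?thesis unfolding p_def e2 unfolding e1
        by (simp add: linear_add[OF r(1)] linear_scale[OF r(1)] linear_diff[OF r(1)] complex_eq_iff algebra_simps)
    qed
    have pn: "cmod (p w) \<le> norm w" for w
    proof -
      obtain l where l: "cmod l = 1" "l * p w = complex_of_real (cmod (p w))" using rotation by blast
      have "p (sm l w) = complex_of_real (cmod (p w))" using psm l by simp
      then have "\<rho> (sm l w) = cmod (p w)" unfolding p_def by (simp add: complex_eq_iff)
      moreover have "\<rho> (sm l w) \<le> norm (sm l w)" using r(2)[of "sm l w"] by linarith
      moreover have "norm (sm l w) = norm w" using A5 l by simp
      ultimately show ?thesis by simp
    qed
    have "p \<in> dual_ball UNIV norm sm"
      unfolding dual_ball_def using padd psm pn by auto
    moreover have "p v = complex_of_real (norm v)"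
    proof -
      have re: "Re (p v) = norm v" unfolding p_def using r(3) by simp
      have "(cmod (p v))\<^sup>2 = (Re (p v))\<^sup>2 + (Im (p v))\<^sup>2" by (rule cmod_power2)
      moreover have "(cmod (p v))\<^sup>2 \<le> (norm v)\<^sup>2" using pn[of v] by (simp add: power_mono)
      ultimately have "(Im (p v))\<^sup>2 \<le> 0" using re by simp
      then have "Im (p v) = 0" by simp
      then show ?thesis using re by (simp add: complex_eq_iff)
    qed
    ultimately show "\<exists>p\<in>dual_ball UNIV norm sm. p v = of_real (norm v)" by auto
  qed (auto simp: A1 A2 A3 A4 A5 A6)
qed

theorem lemma3p3:
  shows
  \<comment> \<open>Situation 1, K = R\<close>
  "(completely_regular_space (euclidean :: 'x::topological_space topology) \<and>
     realcompact (euclidean :: 'x topology) \<and>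
     infinite_dim_K (scaleR :: real \<Rightarrow> 'e::banach \<Rightarrow> 'e) \<and>
     Z_one_dim (scaleR :: real \<Rightarrow> 'e \<Rightarrow> 'e) id \<longrightarrow>
     (\<forall>T \<in> centralizer (Cb :: ('x \<Rightarrow> 'e) set) supnorm (fsm scaleR) id.
        \<exists>h \<in> (Cb :: ('x \<Rightarrow> real) set). \<forall>f \<in> (Cb :: ('x \<Rightarrow> 'e) set).
          T f = (\<lambda>x. h x *\<^sub>R f x)))
   \<and>
   \<comment> \<open>Situation 1, K = C\<close>
   (\<forall>sm :: complex \<Rightarrow> 'e \<Rightarrow> 'e.
     complex_scaling sm \<and>
     completely_regular_space (euclidean :: 'x topology) \<and>
     realcompact (euclidean :: 'x topology) \<and>
     infinite_dim_K sm \<and>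
     Z_one_dim sm cnj \<longrightarrow>
     (\<forall>T \<in> centralizer (Cb :: ('x \<Rightarrow> 'e) set) supnorm (fsm sm) cnj.
        \<exists>h \<in> (Cb :: ('x \<Rightarrow> complex) set). \<forall>f \<in> (Cb :: ('x \<Rightarrow> 'e) set).
          T f = (\<lambda>x. sm (h x) (f x))))
   \<and>
   \<comment> \<open>Situation 2, K = R\<close>
   (Z_one_dim (scaleR :: real \<Rightarrow> 'e \<Rightarrow> 'e) id \<longrightarrow>
     (\<forall>T \<in> centralizer (Cbu :: ('y::complete_space \<Rightarrow> 'e) set) supnorm (fsm scaleR) id.
        \<exists>h \<in> (Cbu :: ('y \<Rightarrow> real) set). \<forall>f \<in> (Cbu :: ('y \<Rightarrow> 'e) set).
          T f = (\<lambda>x. h x *\<^sub>R f x)))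
   \<and>
   \<comment> \<open>Situation 2, K = C\<close>
   (\<forall>sm :: complex \<Rightarrow> 'e \<Rightarrow> 'e.
     complex_scaling sm \<and> Z_one_dim sm cnj \<longrightarrow>
     (\<forall>T \<in> centralizer (Cbu :: ('y \<Rightarrow> 'e) set) supnorm (fsm sm) cnj.
        \<exists>h \<in> (Cbu :: ('y \<Rightarrow> complex) set). \<forall>f \<in> (Cbu :: ('y \<Rightarrow> 'e) set).
          T f = (\<lambda>x. sm (h x) (f x))))"
proof (intro conjI allI impI ballI)
  interpret R: kspace "\<lambda>x::real. x" "scaleR :: real \<Rightarrow> 'e \<Rightarrow> 'e" by (rule kspace_real)
  {
    fix T assume "completely_regular_space (euclidean :: 'x::topological_space topology) \<and>
     realcompact (euclidean :: 'x topology) \<and>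
     infinite_dim_K (scaleR :: real \<Rightarrow> 'e::banach \<Rightarrow> 'e) \<and>
     Z_one_dim (scaleR :: real \<Rightarrow> 'e \<Rightarrow> 'e) id"
      and T: "T \<in> centralizer (Cb :: ('x \<Rightarrow> 'e) set) supnorm (fsm scaleR) id"
    then show "\<exists>h \<in> (Cb :: ('x \<Rightarrow> real) set). \<forall>f \<in> (Cb :: ('x \<Rightarrow> 'e) set). T f = (\<lambda>x. h x *\<^sub>R f x)"
      using R.final_Cb by blast
  }
  {
    fix T assume "Z_one_dim (scaleR :: real \<Rightarrow> 'e \<Rightarrow> 'e) id"
      and T: "T \<in> centralizer (Cbu :: ('y::complete_space \<Rightarrow> 'e) set) supnorm (fsm scaleR) id"
    then show "\<exists>h \<in> (Cbu :: ('y \<Rightarrow> real) set). \<forall>f \<in> (Cbu :: ('y \<Rightarrow> 'e) set). T f = (\<lambda>x. h x *\<^sub>R f x)"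
      using R.final_Cbu by blast
  }
  {
    fix sm :: "complex \<Rightarrow> 'e \<Rightarrow> 'e" and T
    assume h: "complex_scaling sm \<and>
     completely_regular_space (euclidean :: 'x topology) \<and>
     realcompact (euclidean :: 'x topology) \<and>
     infinite_dim_K sm \<and>
     Z_one_dim sm cnj"
      and T: "T \<in> centralizer (Cb :: ('x \<Rightarrow> 'e) set) supnorm (fsm sm) cnj"
    interpret C: kspace Re sm using kspace_complex h by blast
    show "\<exists>h \<in> (Cb :: ('x \<Rightarrow> complex) set). \<forall>f \<in> (Cb :: ('x \<Rightarrow> 'e) set). T f = (\<lambda>x. sm (h x) (f x))"
      using C.final_Cb h T by blast
  }
  {
    fix sm :: "complex \<Rightarrow> 'e \<Rightarrow> 'e" and T
    assume h: "complex_scaling sm \<and> Z_one_dim sm cnj"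
      and T: "T \<in> centralizer (Cbu :: ('y \<Rightarrow> 'e) set) supnorm (fsm sm) cnj"
    interpret C: kspace Re sm using kspace_complex h by blast
    show "\<exists>h \<in> (Cbu :: ('y \<Rightarrow> complex) set). \<forall>f \<in> (Cbu :: ('y \<Rightarrow> 'e) set). T f = (\<lambda>x. sm (h x) (f x))"
      using C.final_Cbu h T by blast
  }
qed

end
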